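(* Let $C=(C_1,\dots,C_L)$ be a random vector whose components $C_i$ are discrete (finite-valued) and mutually independent, with prior $p(C)=\prod_{i=1}^L p(C_i)$, so that $\mathbb{I}(C;\hat X)$ is bounded from above by $\mathbb{H}(C)$. Let $Z'$ be a noise vector independent of $C$, let $\mathcal{G}$ be a generator, and let $\hat X=\mathcal{G}(Z',C)$ be the generated image. Let $Q(C\mid \hat X)$ be an auxiliary (approximate posterior) conditional distribution of mean-field form, $Q(C\mid\hat X)=\prod_{i=1}^L Q(C_i\mid \hat X)$. Define $$L_{\text{info}}(\mathcal{G},Q)=\mathbb{E}_{C\sim p(C),\,\hat X\sim \mathcal{G}(Z',C)}\big[\log Q(C\mid\hat X)-\log p(C)\big].$$ Then, when $L_{\text{info}}(\mathcal{G},Q)\to \mathbb{I}(C;\hat X)$, the conditional total correlation satisfies $\mathbb{TC}(C\mid\hat X)\to 0$ almost everywhere in $\hat X$.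
   Context: Here $\hat X\sim\mathcal{G}(Z',C)$ denotes sampling from the conditional distribution $p(\hat X\mid C)$ induced by the generator (with randomness from $Z'$ and any internal noise). $\mathbb{I}$ denotes mutual information and $\mathbb{H}$ entropy. For a realization $\hat x$ of $\hat X$, the total correlation of $C$ given $\hat X=\hat x$ is $$\mathbb{TC}(C\mid\hat X=\hat x)=D_{KL}\Big(p(C\mid\hat X=\hat x)\,\Big\|\,\prod_{i=1}^L p(C_i\mid \hat X=\hat x)\Big),$$ where $p(C\mid\hat X)$ is the true posterior and $D_{KL}$ is the Kullback–Leibler divergence. *)

theory Defs
  imports "HOL-Probability.Probability"
begin

text \<open>Latent code C = (C_0,...,C_{L-1}) with C_i taking values in the finite set S i;
  a code is a function c with c \<in> PiE {..<L} S.  The generator G(Z',C) is represented by the conditional law of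
  the image given C, given by densities f c w.r.t. a reference measure M on image space.\<close>

definition joint_prior :: "nat \<Rightarrow> (nat \<Rightarrow> 'a \<Rightarrow> real) \<Rightarrow> (nat \<Rightarrow> 'a) \<Rightarrow> real" where
  "joint_prior L p c = (\<Prod>i<L. p i (c i))"

definition marg_dens ::
  "nat \<Rightarrow> (nat \<Rightarrow> 'a set) \<Rightarrow> (nat \<Rightarrow> 'a \<Rightarrow> real) \<Rightarrow> ((nat \<Rightarrow> 'a) \<Rightarrow> 'b \<Rightarrow> real) \<Rightarrow> 'b \<Rightarrow> real" where
  "marg_dens L S p f x = (\<Sum>c\<in>PiE {..<L} S. joint_prior L p c * f c x)"

definition posterior ::
  "nat \<Rightarrow> (nat \<Rightarrow> 'a set) \<Rightarrow> (nat \<Rightarrow> 'a \<Rightarrow> real) \<Rightarrow> ((nat \<Rightarrow> 'a) \<Rightarrow> 'b \<Rightarrow> real) \<Rightarrow> (nat \<Rightarrow> 'a) \<Rightarrow> 'b \<Rightarrow> real" where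
  "posterior L S p f c x = joint_prior L p c * f c x / marg_dens L S p f x"

definition post_marg ::
  "nat \<Rightarrow> (nat \<Rightarrow> 'a set) \<Rightarrow> (nat \<Rightarrow> 'a \<Rightarrow> real) \<Rightarrow> ((nat \<Rightarrow> 'a) \<Rightarrow> 'b \<Rightarrow> real) \<Rightarrow> nat \<Rightarrow> 'b \<Rightarrow> 'a \<Rightarrow> real" where
  "post_marg L S p f i x v = (\<Sum>c\<in>{c\<in>PiE {..<L} S. c i = v}. posterior L S p f c x)"

definition total_corr_given ::
  "nat \<Rightarrow> (nat \<Rightarrow> 'a set) \<Rightarrow> (nat \<Rightarrow> 'a \<Rightarrow> real) \<Rightarrow> ((nat \<Rightarrow> 'a) \<Rightarrow> 'b \<Rightarrow> real) \<Rightarrow> 'b \<Rightarrow> real" where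
  "total_corr_given L S p f x =
     (\<Sum>c\<in>PiE {..<L} S. posterior L S p f c x *
        ln (posterior L S p f c x / (\<Prod>i<L. post_marg L S p f i x (c i))))"

definition mutual_info ::
  "nat \<Rightarrow> (nat \<Rightarrow> 'a set) \<Rightarrow> (nat \<Rightarrow> 'a \<Rightarrow> real) \<Rightarrow> ((nat \<Rightarrow> 'a) \<Rightarrow> 'b \<Rightarrow> real) \<Rightarrow> 'b measure \<Rightarrow> real" where
  "mutual_info L S p f M =
     (\<integral>x. (\<Sum>c\<in>PiE {..<L} S. joint_prior L p c * f c x *
        ln (posterior L S p f c x / joint_prior L p c)) \<partial>M)"

definition mf_Q :: "nat \<Rightarrow> (nat \<Rightarrow> 'b \<Rightarrow> 'a \<Rightarrow> real) \<Rightarrow> (nat \<Rightarrow> 'a) \<Rightarrow> 'b \<Rightarrow> real" where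
  "mf_Q L q c x = (\<Prod>i<L. q i x (c i))"

definition L_info_integrand ::
  "nat \<Rightarrow> (nat \<Rightarrow> 'a set) \<Rightarrow> (nat \<Rightarrow> 'a \<Rightarrow> real) \<Rightarrow> ((nat \<Rightarrow> 'a) \<Rightarrow> 'b \<Rightarrow> real)
     \<Rightarrow> (nat \<Rightarrow> 'b \<Rightarrow> 'a \<Rightarrow> real) \<Rightarrow> 'b \<Rightarrow> real" where
  "L_info_integrand L S p f q x =
     (\<Sum>c\<in>PiE {..<L} S. joint_prior L p c * f c x * (ln (mf_Q L q c x) - ln (joint_prior L p c)))"

definition L_info ::
  "nat \<Rightarrow> (nat \<Rightarrow> 'a set) \<Rightarrow> (nat \<Rightarrow> 'a \<Rightarrow> real) \<Rightarrow> ((nat \<Rightarrow> 'a) \<Rightarrow> 'b \<Rightarrow> real)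
     \<Rightarrow> (nat \<Rightarrow> 'b \<Rightarrow> 'a \<Rightarrow> real) \<Rightarrow> 'b measure \<Rightarrow> real" where
  "L_info L S p f q M = (\<integral>x. L_info_integrand L S p f q x \<partial>M)"

end

theory Submission
  imports Defs
begin

lemma gibbs:
  fixes P R :: "'c \<Rightarrow> real"
  assumes "finite A" "\<And>a. a\<in>A \<Longrightarrow> P a \<ge> 0" "sum P A = 1" "sum R A \<le> 1"
    "\<And>a. a\<in>A \<Longrightarrow> R a \<ge> 0" "\<And>a. a\<in>A \<Longrightarrow> P a > 0 \<Longrightarrow> R a > 0"
  shows "0 \<le> (\<Sum>a\<in>A. P a * ln (P a / R a))"
proof -
  have "P a - R a \<le> P a * ln (P a / R a)" if "a\<in>A" for a
  proof (cases "P a > 0")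
    case True
    then have R: "R a > 0" using assms that by auto
    have "ln (R a / P a) \<le> R a / P a - 1" using ln_le_minus_one R True by simp
    moreover have "ln (P a / R a) = - ln (R a / P a)" using R True by (simp add: ln_div)
    ultimately have "1 - R a / P a \<le> ln (P a / R a)" by simp
    then have "P a * (1 - R a / P a) \<le> P a * ln (P a / R a)" using True
      by (intro mult_left_mono) auto
    moreover have "P a * (1 - R a / P a) = P a - R a" using True by (simp add: field_simps)
    ultimately show ?thesis by simp
  next
    case False then have "P a = 0" using assms that by force
    thus ?thesis using assms that by simp
  qed
  hence "(\<Sum>a\<in>A. P a - R a) \<le> (\<Sum>a\<in>A. P a * ln (P a / R a))" by (rule sum_mono)
  moreover have "(\<Sum>a\<in>A. P a - R a) = sum P A - sum R A" by (simp add: sum_subtractf)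
  ultimately show ?thesis using assms by linarith
qed

lemma key:
  fixes P :: "(nat \<Rightarrow> 'a) \<Rightarrow> real" and r :: "nat \<Rightarrow> 'a \<Rightarrow> real"
  assumes fin: "\<And>i. i<L \<Longrightarrow> finite (S i)"
    and Pnn: "\<And>c. c \<in> PiE {..<L} S \<Longrightarrow> P c \<ge> 0"
    and Psum: "(\<Sum>c\<in>PiE {..<L} S. P c) = 1"
    and rpos: "\<And>i v. i<L \<Longrightarrow> v\<in>S i \<Longrightarrow> r i v > 0"
    and rsum: "\<And>i. i<L \<Longrightarrow> (\<Sum>v\<in>S i. r i v) = 1"
  defines "Pm \<equiv> \<lambda>i v. (\<Sum>c\<in>{c\<in>PiE {..<L} S. c i = v}. P c)"
  shows "0 \<le> (\<Sum>c\<in>PiE {..<L} S. P c * ln (P c / (\<Prod>i<L. Pm i (c i))))"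
    and "(\<Sum>c\<in>PiE {..<L} S. P c * ln (P c / (\<Prod>i<L. Pm i (c i))))
          \<le> (\<Sum>c\<in>PiE {..<L} S. P c * (ln (P c) - ln (\<Prod>i<L. r i (c i))))"
proof -
  let ?Pi = "PiE {..<L} S"
  have finPi: "finite ?Pi" using fin by (intro finite_PiE) auto
  have msum: "(\<Sum>v\<in>S i. Pm i v) = 1" if "i<L" for i
  proof -
    have "(\<Sum>v\<in>S i. Pm i v) = (\<Sum>c\<in>?Pi. P c)"
      unfolding Pm_def using that fin finPi
      by (intro sum.group) (auto simp: PiE_def Pi_def)
    thus ?thesis using Psum by simp
  qed
  have Pmnn: "Pm i v \<ge> 0" for i v unfolding Pm_def using Pnn by (intro sum_nonneg) auto
  have Pmge: "P c \<le> Pm i (c i)" if "c \<in> ?Pi" for c i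
    unfolding Pm_def using that Pnn finPi by (intro member_le_sum) auto
  define R where "R c = (\<Prod>i<L. Pm i (c i))" for c
  have Rsum: "sum R ?Pi = 1"
  proof -
    have "sum R ?Pi = (\<Prod>i<L. \<Sum>v\<in>S i. Pm i v)"
      unfolding R_def using fin by (subst prod_sum_PiE) auto
    also have "\<dots> = 1" using msum by simp
    finally show ?thesis .
  qed
  have Rpos: "R c > 0" if "c \<in> ?Pi" "P c > 0" for c
    unfolding R_def using Pmge[OF that(1)] that(2) by (intro prod_pos) (auto intro: less_le_trans)
  show "0 \<le> (\<Sum>c\<in>?Pi. P c * ln (P c / (\<Prod>i<L. Pm i (c i))))"
    using gibbs[of ?Pi P R] finPi Pnn Psum Rsum Rpos unfolding R_def
    by (auto intro!: prod_nonneg Pmnn)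
  define h where "h i v = ln (Pm i v) - ln (r i v)" for i v
  have pt: "P c * ln (P c / (\<Prod>i<L. Pm i (c i))) + (\<Sum>i<L. P c * h i (c i))
      = P c * (ln (P c) - ln (\<Prod>i<L. r i (c i)))" if c: "c \<in> ?Pi" for c
  proof (cases "P c > 0")
    case True
    have pm: "Pm i (c i) > 0" if "i<L" for i using Pmge[OF c, of i] True by linarith
    have rr: "r i (c i) > 0" if "i<L" for i using rpos that c by auto
    have "ln (P c / (\<Prod>i<L. Pm i (c i))) = ln (P c) - (\<Sum>i<L. ln (Pm i (c i)))"
    proof -
      have "ln (\<Prod>i<L. Pm i (c i)) = (\<Sum>i<L. ln (Pm i (c i)))"
        using pm by (subst ln_prod) (auto dest: less_imp_neq[symmetric] less_imp_neq)
      moreover have pp: "(\<Prod>i<L. Pm i (c i)) > 0" using pm by (intro prod_pos) auto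
      moreover have "ln (P c / (\<Prod>i<L. Pm i (c i))) = ln (P c) - ln (\<Prod>i<L. Pm i (c i))"
      proof -
        have "P c \<noteq> 0 \<and> (\<Prod>i<L. Pm i (c i)) \<noteq> 0" using True pp by linarith
        then show ?thesis unfolding ln_div by (rule if_P)
      qed
      ultimately show ?thesis by simp
    qed
    moreover have "ln (\<Prod>i<L. r i (c i)) = (\<Sum>i<L. ln (r i (c i)))"
      using rr by (subst ln_prod) (auto, metis less_irrefl)
    ultimately show ?thesis
      by (simp add: h_def sum_subtractf sum_distrib_left[symmetric] algebra_simps, metis distrib_left)
  next
    case False
    then have "P c = 0" using Pnn c by force
    thus ?thesis by simp
  qed
  have swap: "(\<Sum>c\<in>?Pi. \<Sum>i<L. P c * h i (c i)) = (\<Sum>i<L. \<Sum>v\<in>S i. Pm i v * h i v)"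
  proof -
    have "(\<Sum>c\<in>?Pi. \<Sum>i<L. P c * h i (c i)) = (\<Sum>i<L. \<Sum>c\<in>?Pi. P c * h i (c i))"
      by (rule sum.swap)
    also have "\<dots> = (\<Sum>i<L. \<Sum>v\<in>S i. Pm i v * h i v)"
    proof (rule sum.cong[OF refl])
      fix i assume i: "i \<in> {..<L}"
      have "(\<Sum>v\<in>S i. Pm i v * h i v) = (\<Sum>v\<in>S i. \<Sum>c\<in>{c\<in>?Pi. c i = v}. P c * h i (c i))"
        unfolding Pm_def sum_distrib_right by (intro sum.cong) auto
      also have "\<dots> = (\<Sum>c\<in>?Pi. P c * h i (c i))"
        using i fin finPi by (intro sum.group) (auto simp: PiE_def Pi_def)
      finally show "(\<Sum>c\<in>?Pi. P c * h i (c i)) = (\<Sum>v\<in>S i. Pm i v * h i v)" by simp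
    qed
    finally show ?thesis .
  qed
  have inner: "0 \<le> (\<Sum>v\<in>S i. Pm i v * h i v)" if i: "i<L" for i
  proof -
    have "(\<Sum>v\<in>S i. Pm i v * h i v) = (\<Sum>v\<in>S i. Pm i v * ln (Pm i v / r i v))"
    proof (rule sum.cong[OF refl])
      fix v assume v: "v \<in> S i"
      show "Pm i v * h i v = Pm i v * ln (Pm i v / r i v)"
      proof (cases "Pm i v = 0")
        case False
        then have "Pm i v > 0" using Pmnn[of i v] by linarith
        thus ?thesis using rpos[OF i v] by (simp add: h_def ln_div)
      qed simp
    qed
    also have "0 \<le> \<dots>"
      using gibbs[of "S i" "Pm i" "r i"] fin[OF i] Pmnn msum[OF i] rsum[OF i] rpos[OF i]
      by (auto intro: less_imp_le)
    finally show ?thesis by simp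
  qed
  have "(\<Sum>c\<in>?Pi. P c * ln (P c / (\<Prod>i<L. Pm i (c i)))) + (\<Sum>i<L. \<Sum>v\<in>S i. Pm i v * h i v)
      = (\<Sum>c\<in>?Pi. P c * (ln (P c) - ln (\<Prod>i<L. r i (c i))))"
    using pt by (simp add: swap[symmetric] sum.distrib[symmetric])
  moreover have "0 \<le> (\<Sum>i<L. \<Sum>v\<in>S i. Pm i v * h i v)" by (rule sum_nonneg) (use inner in auto)
  ultimately show "(\<Sum>c\<in>?Pi. P c * ln (P c / (\<Prod>i<L. Pm i (c i))))
          \<le> (\<Sum>c\<in>?Pi. P c * (ln (P c) - ln (\<Prod>i<L. r i (c i))))" by linarith
qed

theorem lemma1:
  fixes L :: nat
    and S :: "nat \<Rightarrow> 'a set"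
    and p :: "nat \<Rightarrow> 'a \<Rightarrow> real"
    and M :: "'b measure"
    and f :: "(nat \<Rightarrow> 'a) \<Rightarrow> 'b \<Rightarrow> real"
    and q :: "nat \<Rightarrow> nat \<Rightarrow> 'b \<Rightarrow> 'a \<Rightarrow> real"
  assumes S_fin: "\<And>i. i < L \<Longrightarrow> finite (S i) \<and> S i \<noteq> {}"
    and p_nonneg: "\<And>i v. i < L \<Longrightarrow> v \<in> S i \<Longrightarrow> p i v \<ge> 0"
    and p_sum: "\<And>i. i < L \<Longrightarrow> (\<Sum>v\<in>S i. p i v) = 1"
    and f_meas: "\<And>c. c \<in> PiE {..<L} S \<Longrightarrow> f c \<in> borel_measurable M"
    and f_nonneg: "\<And>c x. c \<in> PiE {..<L} S \<Longrightarrow> x \<in> space M \<Longrightarrow> f c x \<ge> 0"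
    and f_int: "\<And>c. c \<in> PiE {..<L} S \<Longrightarrow> integrable M (f c)"
    and f_norm: "\<And>c. c \<in> PiE {..<L} S \<Longrightarrow> (\<integral>x. f c x \<partial>M) = 1"
    and q_meas: "\<And>n i v. i < L \<Longrightarrow> v \<in> S i \<Longrightarrow> (\<lambda>x. q n i x v) \<in> borel_measurable M"
    and q_pos: "\<And>n i x v. i < L \<Longrightarrow> x \<in> space M \<Longrightarrow> v \<in> S i \<Longrightarrow> q n i x v > 0"
    and q_sum: "\<And>n i x. i < L \<Longrightarrow> x \<in> space M \<Longrightarrow> (\<Sum>v\<in>S i. q n i x v) = 1"
    and L_int: "eventually (\<lambda>n. integrable M (L_info_integrand L S p f (q n))) sequentially"
    and conv: "(\<lambda>n. L_info L S p f (q n) M) \<longlonglongrightarrow> mutual_info L S p f M"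
  shows "AE x in M. marg_dens L S p f x > 0 \<longrightarrow> total_corr_given L S p f x = 0"
proof -
  let ?Pi = "PiE {..<L} S"
  let ?pi = "joint_prior L p"
  let ?m = "marg_dens L S p f"
  let ?P = "posterior L S p f"
  have fin: "\<And>i. i<L \<Longrightarrow> finite (S i)" using S_fin by auto
  have finPi: "finite ?Pi" using fin by (intro finite_PiE) auto
  have pi_nn: "?pi c \<ge> 0" if "c \<in> ?Pi" for c
    unfolding joint_prior_def using that p_nonneg by (intro prod_nonneg) (auto simp: PiE_def Pi_def)
  have pf_nn: "?pi c * f c x \<ge> 0" if "c \<in> ?Pi" "x \<in> space M" for c x
    using pi_nn[OF that(1)] f_nonneg[OF that] by simp
  have m_nn: "?m x \<ge> 0" if "x \<in> space M" for x
    unfolding marg_dens_def using pf_nn that by (intro sum_nonneg) auto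
  have pf_le: "?pi c * f c x \<le> ?m x" if "c \<in> ?Pi" "x \<in> space M" for c x
    unfolding marg_dens_def using pf_nn that finPi by (intro member_le_sum) auto
  define MIi where "MIi x = (\<Sum>c\<in>?Pi. ?pi c * f c x * ln (?P c x / ?pi c))" for x
  define D where "D n x = MIi x - L_info_integrand L S p f (q n) x" for n x
  define g where "g x = ?m x * total_corr_given L S p f x" for x
  have MI_eq: "mutual_info L S p f M = integral\<^sup>L M MIi"
    unfolding mutual_info_def MIi_def by simp
  have pw: "0 \<le> g x \<and> g x \<le> D n x" if x: "x \<in> space M" for n x
  proof (cases "?m x = 0")
    case True
    then have z: "?pi c * f c x = 0" if "c \<in> ?Pi" for c
      using that sum_nonneg_eq_0_iff[OF finPi, of "\<lambda>c. ?pi c * f c x"] pf_nn x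
      unfolding marg_dens_def by auto
    have "MIi x = 0" unfolding MIi_def by (rule sum.neutral) (simp add: z)
    moreover have "L_info_integrand L S p f (q n) x = 0"
      unfolding L_info_integrand_def by (rule sum.neutral) (simp add: z)
    ultimately have "D n x = 0" unfolding D_def by simp
    moreover have "g x = 0" unfolding g_def using True by simp
    ultimately show ?thesis by simp
  next
    case False
    then have mpos: "?m x > 0" using m_nn[OF x] by linarith
    have Pdef: "?P c x = ?pi c * f c x / ?m x" for c unfolding posterior_def by simp
    have Pnn: "?P c x \<ge> 0" if "c \<in> ?Pi" for c using pf_nn[OF that x] mpos Pdef by simp
    have Psum: "(\<Sum>c\<in>?Pi. ?P c x) = 1"
      unfolding Pdef sum_divide_distrib[symmetric] using mpos by (simp add: marg_dens_def)
    note K = key[of L S "\<lambda>c. ?P c x" "\<lambda>i v. q n i x v", OF fin Pnn Psum q_pos[OF _ x] q_sum[OF _ x]]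
    have TC: "total_corr_given L S p f x = (\<Sum>c\<in>?Pi. ?P c x * ln (?P c x / (\<Prod>i<L. post_marg L S p f i x (c i))))"
      unfolding total_corr_given_def by simp
    have TCnn: "0 \<le> total_corr_given L S p f x"
      using K(1) unfolding TC post_marg_def by simp
    have TCle: "total_corr_given L S p f x \<le> (\<Sum>c\<in>?Pi. ?P c x * (ln (?P c x) - ln (mf_Q L (q n) c x)))"
      using K(2) unfolding TC post_marg_def mf_Q_def by simp
    have "g x \<le> ?m x * (\<Sum>c\<in>?Pi. ?P c x * (ln (?P c x) - ln (mf_Q L (q n) c x)))"
      unfolding g_def using TCle mpos by (intro mult_left_mono) auto
    also have "\<dots> = D n x"
      unfolding D_def MIi_def L_info_integrand_def sum_distrib_left sum_subtractf[symmetric]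
    proof (rule sum.cong[OF refl])
      fix c assume c: "c \<in> ?Pi"
      show "?m x * (?P c x * (ln (?P c x) - ln (mf_Q L (q n) c x))) =
        ?pi c * f c x * ln (?P c x / ?pi c) - ?pi c * f c x * (ln (mf_Q L (q n) c x) - ln (?pi c))"
      proof (cases "?pi c * f c x = 0")
        case True
        then have "?P c x = 0" using Pdef by simp
        then show ?thesis using True by simp
      next
        case False
        then have pfp: "?pi c * f c x > 0" using pf_nn[OF c x] by linarith
        have pip: "?pi c > 0" using pfp pi_nn[OF c] f_nonneg[OF c x]
          by (metis less_eq_real_def mult_zero_left)
        have Pp: "?P c x > 0" using pfp mpos Pdef by simp
        have mP: "?m x * ?P c x = ?pi c * f c x" using Pdef mpos by simp
        have lnP: "ln (?P c x / ?pi c) = ln (?P c x) - ln (?pi c)" using Pp pip by (simp add: ln_div)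
        have e: "?m x * (?P c x * (a - b)) = (?m x * ?P c x) * (a - b)" for a b by (simp only: mult.assoc)
        show ?thesis unfolding e mP lnP by (simp add: algebra_simps)
      qed
    qed
    finally show ?thesis using TCnn mpos unfolding g_def by simp
  qed
  have fm: "(\<lambda>x. f c x) \<in> borel_measurable M" if "c \<in> ?Pi" for c using f_meas[OF that] by simp
  have mm: "(\<lambda>x. ?m x) \<in> borel_measurable M"
    unfolding marg_dens_def
  proof (rule borel_measurable_sum)
    fix c assume c: "c \<in> ?Pi"
    note fm[OF c, measurable]
    show "(\<lambda>x. ?pi c * f c x) \<in> borel_measurable M" by measurable
  qed
  have Pm: "(\<lambda>x. ?P c x) \<in> borel_measurable M" if c: "c \<in> ?Pi" for c
  proof -
    note fm[OF c, measurable] mm[measurable]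
    show ?thesis unfolding posterior_def by measurable
  qed
  have meas_MIi: "MIi \<in> borel_measurable M"
    unfolding MIi_def[abs_def]
  proof (rule borel_measurable_sum)
    fix c assume c: "c \<in> ?Pi"
    note fm[OF c, measurable] Pm[OF c, measurable]
    show "(\<lambda>x. ?pi c * f c x * ln (?P c x / ?pi c)) \<in> borel_measurable M" by measurable
  qed
  have Qm: "(\<lambda>x. mf_Q L (q n) c x) \<in> borel_measurable M" if c: "c \<in> ?Pi" for c n
    unfolding mf_Q_def
  proof (rule borel_measurable_prod)
    fix i assume i: "i \<in> {..<L}"
    then have "c i \<in> S i" using c by (auto simp: PiE_def Pi_def)
    then show "(\<lambda>x. q n i x (c i)) \<in> borel_measurable M" using q_meas i by auto
  qed
  have meas_Li: "L_info_integrand L S p f (q n) \<in> borel_measurable M" for n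
    unfolding L_info_integrand_def[abs_def]
  proof (rule borel_measurable_sum)
    fix c assume c: "c \<in> ?Pi"
    note fm[OF c, measurable] Qm[OF c, measurable]
    show "(\<lambda>x. ?pi c * f c x * (ln (mf_Q L (q n) c x) - ln (?pi c))) \<in> borel_measurable M" by measurable
  qed
  have PMm: "(\<lambda>x. post_marg L S p f i x v) \<in> borel_measurable M" for i v
    unfolding post_marg_def
    by (rule borel_measurable_sum) (use Pm in auto)
  have sm: "(\<lambda>x. ?P c x * ln (?P c x / (\<Prod>i<L. post_marg L S p f i x (c i)))) \<in> borel_measurable M"
    if c: "c \<in> ?Pi" for c
  proof -
    note Pm[OF c, measurable]
    have [measurable]: "(\<lambda>x. \<Prod>i<L. post_marg L S p f i x (c i)) \<in> borel_measurable M"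
      by (rule borel_measurable_prod) (use PMm in auto)
    show ?thesis by measurable
  qed
  have "(\<lambda>x. \<Sum>c\<in>?Pi. ?P c x * ln (?P c x / (\<Prod>i<L. post_marg L S p f i x (c i)))) \<in> borel_measurable M"
    by (rule borel_measurable_sum) (rule sm)
  from borel_measurable_times[OF mm this]
  have meas_g: "g \<in> borel_measurable M"
    unfolding g_def[abs_def] total_corr_given_def .
  obtain N where N: "\<And>n. n \<ge> N \<Longrightarrow> integrable M (L_info_integrand L S p f (q n))"
    using L_int unfolding eventually_sequentially by blast
  define B where "B x = (\<Sum>c\<in>?Pi. \<bar>ln (?pi c)\<bar> * ?pi c * f c x)" for x
  have B_int: "integrable M B" unfolding B_def
    by (rule Bochner_Integration.integrable_sum) (auto intro!: integrable_mult_right f_int)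
  have MIi_le: "MIi x \<le> B x" if x: "x \<in> space M" for x
    unfolding MIi_def B_def
  proof (rule sum_mono)
    fix c assume c: "c \<in> ?Pi"
    show "?pi c * f c x * ln (?P c x / ?pi c) \<le> \<bar>ln (?pi c)\<bar> * ?pi c * f c x"
    proof (cases "?pi c * f c x = 0")
      case True
      have l: "?pi c * f c x * ln (?P c x / ?pi c) = 0" using True by simp
      have r: "\<bar>ln (?pi c)\<bar> * ?pi c * f c x = \<bar>ln (?pi c)\<bar> * (?pi c * f c x)" by (simp only: mult.assoc)
      show ?thesis unfolding l r True by simp
    next
      case False
      then have pfp: "?pi c * f c x > 0" using pf_nn[OF c x] by linarith
      have pip: "?pi c > 0" using pfp pi_nn[OF c] f_nonneg[OF c x]
        by (metis less_eq_real_def mult_zero_left)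
      have mpos: "?m x > 0" using pfp pf_le[OF c x] by linarith
      have Pp: "?P c x > 0" using pfp mpos unfolding posterior_def by simp
      have P1: "?P c x \<le> 1" using pf_le[OF c x] mpos unfolding posterior_def by simp
      have "ln (?P c x / ?pi c) = ln (?P c x) - ln (?pi c)" using Pp pip by (simp add: ln_div)
      also have "\<dots> \<le> \<bar>ln (?pi c)\<bar>"
      proof -
        have "ln (?P c x) \<le> 0" using P1 Pp by simp
        then show ?thesis using abs_ge_minus_self[of "ln (?pi c)"] by linarith
      qed
      finally have "?pi c * f c x * ln (?P c x / ?pi c) \<le> ?pi c * f c x * \<bar>ln (?pi c)\<bar>"
        by (rule mult_left_mono) (use pfp in auto)
      moreover have "\<bar>ln (?pi c)\<bar> * ?pi c * f c x = ?pi c * f c x * \<bar>ln (?pi c)\<bar>" by (simp only: mult_ac)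
      ultimately show ?thesis by linarith
    qed
  qed
  have MIi_int: "integrable M MIi"
  proof (rule Bochner_Integration.integrable_bound[of _ "\<lambda>x. \<bar>L_info_integrand L S p f (q N) x\<bar> + B x"])
    show "integrable M (\<lambda>x. \<bar>L_info_integrand L S p f (q N) x\<bar> + B x)"
      using N[of N] B_int by auto
    show "MIi \<in> borel_measurable M" by (rule meas_MIi)
    show "AE x in M. norm (MIi x) \<le> norm (\<bar>L_info_integrand L S p f (q N) x\<bar> + B x)"
    proof (rule AE_I2)
      fix x assume x: "x \<in> space M"
      have "B x \<ge> 0" unfolding B_def using pf_nn x by (auto intro!: sum_nonneg simp: mult.assoc)
      moreover have "MIi x \<ge> L_info_integrand L S p f (q N) x" using pw[OF x, of N] unfolding D_def by simp
      ultimately show "norm (MIi x) \<le> norm (\<bar>L_info_integrand L S p f (q N) x\<bar> + B x)"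
        using MIi_le[OF x] by simp
    qed
  qed
  have D_int: "integrable M (D n)" if "n \<ge> N" for n
    unfolding D_def[abs_def] using MIi_int N[OF that] by auto
  have g_int: "integrable M g"
  proof (rule Bochner_Integration.integrable_bound[OF D_int[of N] meas_g])
    show "AE x in M. norm (g x) \<le> norm (D N x)"
    proof (rule AE_I2)
      fix x assume "x \<in> space M"
      from pw[OF this, of N] show "norm (g x) \<le> norm (D N x)" by simp
    qed
  qed simp
  have g_le: "integral\<^sup>L M g \<le> mutual_info L S p f M - L_info L S p f (q n) M" if "n \<ge> N" for n
  proof -
    have "integral\<^sup>L M g \<le> integral\<^sup>L M (D n)"
      using g_int D_int[OF that] pw by (intro integral_mono) auto
    also have "\<dots> = mutual_info L S p f M - L_info L S p f (q n) M"
      unfolding D_def[abs_def] MI_eq L_info_def using MIi_int N[OF that] by simp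
    finally show ?thesis .
  qed
  have lim: "(\<lambda>n. mutual_info L S p f M - L_info L S p f (q n) M) \<longlonglongrightarrow> 0"
    using tendsto_diff[OF tendsto_const conv, of "mutual_info L S p f M"] by simp
  have "integral\<^sup>L M g \<le> 0"
    by (rule LIMSEQ_le_const[OF lim]) (use g_le in auto)
  moreover have "integral\<^sup>L M g \<ge> 0" using pw by (intro Bochner_Integration.integral_nonneg) auto
  ultimately have "integral\<^sup>L M g = 0" by simp
  moreover have "AE x in M. 0 \<le> g x" using pw by (intro AE_I2) auto
  ultimately have "AE x in M. g x = 0"
    using integral_nonneg_eq_0_iff_AE[OF g_int] by auto
  then show ?thesis
    by (rule AE_mp) (intro AE_I2, simp add: g_def)
qed

end
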